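(* Let $K$ be a field of characteristic $0$, $S=K[x_1,\ldots,x_n]$, and let $G$ be a finite simple graph on vertex set $[n]$ with edge set $E(G)$. Let $I\subset S$ be the vertex cover ideal of $G$, i.e. the ideal generated by all monomials $\prod_{i\in C}x_i$ with $C\subseteq[n]$ a vertex cover of $G$ (so $I=\bigcap_{\{i,j\}\in E(G)}(x_i,x_j)$), and let $I^{(m)}=\bigcap_{\{i,j\}\in E(G)}(x_i,x_j)^m$. Suppose that $(I^{(2)})^2\subseteq I^3$. Then $(I^{(k-1)})^2\subseteq I^k$ for all $k\ge2$. In particular, for every $k\ge 2$, every homogeneous ideal $J$ with $I^k\subseteq J\subseteq I^{(k)}$ is strongly Golod, i.e. $\partial(J)^2\subseteq J$, where $\partial(J)$ is the ideal generated by all $\partial f/\partial x_i$ with $f\in J$.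
   Context: A vertex cover of $G$ is a subset $C\subseteq[n]$ with $C\cap\{i,j\}\ne\emptyset$ for all edges $\{i,j\}$ of $G$. *)

theory Defs
  imports "HOL-Library.Poly_Mapping"
begin

text \<open>Polynomials over K in variables x_i (i :: nat), represented as finitely supported
  maps from monomials (finitely supported exponent vectors) to coefficients.\<close>

type_synonym 'a mpoly = "(nat \<Rightarrow>\<^sub>0 nat) \<Rightarrow>\<^sub>0 'a"

definition polyring :: "nat \<Rightarrow> ('a::comm_ring_1) mpoly set" where
  "polyring n = {p :: 'a mpoly. \<forall>m\<in>Poly_Mapping.keys p. Poly_Mapping.keys m \<subseteq> {1..n}}"

definition var :: "nat \<Rightarrow> ('a::comm_ring_1) mpoly" where
  "var i = Poly_Mapping.single (Poly_Mapping.single i 1) 1"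

definition gen_ideal :: "nat \<Rightarrow> ('a::comm_ring_1) mpoly set \<Rightarrow> 'a mpoly set" where
  "gen_ideal n A = {\<Sum>a\<in>F. r a * a | F r. finite F \<and> F \<subseteq> A \<and> (\<forall>a\<in>F. r a \<in> polyring n)}"

definition ideal_prod :: "nat \<Rightarrow> ('a::comm_ring_1) mpoly set \<Rightarrow> 'a mpoly set \<Rightarrow> 'a mpoly set" where
  "ideal_prod n I J = gen_ideal n {a * b | a b. a \<in> I \<and> b \<in> J}"

fun ideal_pow :: "nat \<Rightarrow> ('a::comm_ring_1) mpoly set \<Rightarrow> nat \<Rightarrow> 'a mpoly set" where
  "ideal_pow n I 0 = polyring n"
| "ideal_pow n I (Suc k) = ideal_prod n (ideal_pow n I k) I"

definition simple_graph_on :: "nat \<Rightarrow> nat set set \<Rightarrow> bool" where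
  "simple_graph_on n E \<longleftrightarrow> (\<forall>e\<in>E. \<exists>i j. e = {i, j} \<and> i \<noteq> j \<and> i \<in> {1..n} \<and> j \<in> {1..n})"

definition vertex_cover :: "nat \<Rightarrow> nat set set \<Rightarrow> nat set \<Rightarrow> bool" where
  "vertex_cover n E C \<longleftrightarrow> C \<subseteq> {1..n} \<and> (\<forall>e\<in>E. C \<inter> e \<noteq> {})"

definition cover_ideal :: "nat \<Rightarrow> nat set set \<Rightarrow> ('a::comm_ring_1) mpoly set" where
  "cover_ideal n E = gen_ideal n {\<Prod>i\<in>C. var i | C. vertex_cover n E C}"

definition cover_symb_pow :: "nat \<Rightarrow> nat set set \<Rightarrow> nat \<Rightarrow> ('a::comm_ring_1) mpoly set" where
  "cover_symb_pow n E m = polyring n \<inter> (\<Inter>e\<in>E. ideal_pow n (gen_ideal n (var ` e)) m)"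

definition total_deg :: "(nat \<Rightarrow>\<^sub>0 nat) \<Rightarrow> nat" where
  "total_deg m = (\<Sum>i\<in>Poly_Mapping.keys m. Poly_Mapping.lookup m i)"

definition homogeneous :: "('a::comm_ring_1) mpoly \<Rightarrow> bool" where
  "homogeneous p \<longleftrightarrow> (\<forall>m\<in>Poly_Mapping.keys p. \<forall>m'\<in>Poly_Mapping.keys p. total_deg m = total_deg m')"

definition homogeneous_ideal :: "nat \<Rightarrow> ('a::comm_ring_1) mpoly set \<Rightarrow> bool" where
  "homogeneous_ideal n J \<longleftrightarrow>
     (\<exists>A. A \<subseteq> polyring n \<and> (\<forall>a\<in>A. homogeneous a) \<and> J = gen_ideal n A)"

definition pderiv_var :: "nat \<Rightarrow> ('a::comm_ring_1) mpoly \<Rightarrow> 'a mpoly" where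
  "pderiv_var i f = (\<Sum>m\<in>Poly_Mapping.keys f.
      Poly_Mapping.single (m - Poly_Mapping.single i 1) (of_nat (Poly_Mapping.lookup m i) * Poly_Mapping.lookup f m))"

definition deriv_ideal :: "nat \<Rightarrow> ('a::comm_ring_1) mpoly set \<Rightarrow> 'a mpoly set" where
  "deriv_ideal n J = gen_ideal n {pderiv_var i f | i f. i \<in> {1..n} \<and> f \<in> J}"

definition strongly_golod :: "nat \<Rightarrow> ('a::comm_ring_1) mpoly set \<Rightarrow> bool" where
  "strongly_golod n J \<longleftrightarrow> ideal_pow n (deriv_ideal n J) 2 \<subseteq> J"

end

theory Submission
  imports Defs
begin


definition mideal :: "nat \<Rightarrow> ((nat \<Rightarrow>\<^sub>0 nat) \<Rightarrow> bool) \<Rightarrow> ('a::comm_ring_1) mpoly set" where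
  "mideal n U = {p. \<forall>\<mu>\<in>Poly_Mapping.keys p. Poly_Mapping.keys \<mu> \<subseteq> {1..n} \<and> U \<mu>}"

definition upcl :: "nat \<Rightarrow> ((nat \<Rightarrow>\<^sub>0 nat) \<Rightarrow> bool) \<Rightarrow> bool" where
  "upcl n U \<longleftrightarrow> (\<forall>\<mu> \<nu>. U \<mu> \<longrightarrow> Poly_Mapping.keys \<nu> \<subseteq> {1..n} \<longrightarrow> U (\<mu> + \<nu>))"

lemma polyring_mideal: "polyring n = mideal n (\<lambda>_. True)"
  by (simp add: polyring_def mideal_def)

lemma mideal_zero: "0 \<in> mideal n U" by (simp add: mideal_def)

lemma mideal_add: "p \<in> mideal n U \<Longrightarrow> q \<in> mideal n U \<Longrightarrow> p + q \<in> mideal n U"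
  unfolding mideal_def using keys_add[of p q] by blast

lemma mideal_sum: "(\<And>x. x \<in> F \<Longrightarrow> f x \<in> mideal n U) \<Longrightarrow> sum f F \<in> mideal n U"
  by (induction F rule: infinite_finite_induct) (auto simp: mideal_zero mideal_add)

lemma keys_plus_nat: "Poly_Mapping.keys ((\<mu>::nat \<Rightarrow>\<^sub>0 nat) + \<nu>) = Poly_Mapping.keys \<mu> \<union> Poly_Mapping.keys \<nu>"
  by (auto simp: in_keys_iff lookup_add)

lemma mideal_mult:
  assumes "p \<in> mideal n U" "q \<in> mideal n V"
    "\<And>\<mu> \<nu>. Poly_Mapping.keys \<mu> \<subseteq> {1..n} \<Longrightarrow> Poly_Mapping.keys \<nu> \<subseteq> {1..n} \<Longrightarrow> U \<mu> \<Longrightarrow> V \<nu> \<Longrightarrow> W (\<mu> + \<nu>)"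
  shows "p * q \<in> mideal n W"
  unfolding mideal_def
proof (rule CollectI, rule ballI)
  fix x assume "x \<in> Poly_Mapping.keys (p*q)"
  then obtain a b where "x = a + b" "a \<in> Poly_Mapping.keys p" "b \<in> Poly_Mapping.keys q" using keys_mult by blast
  moreover have "Poly_Mapping.keys a \<subseteq> {1..n} \<and> U a" using assms(1) \<open>a \<in> Poly_Mapping.keys p\<close> unfolding mideal_def by blast
  moreover have "Poly_Mapping.keys b \<subseteq> {1..n} \<and> V b" using assms(2) \<open>b \<in> Poly_Mapping.keys q\<close> unfolding mideal_def by blast
  ultimately show "Poly_Mapping.keys x \<subseteq> {1..n} \<and> W x" using assms(3) by (simp add: keys_plus_nat)
qed

lemma polyring_mult: "p \<in> polyring n \<Longrightarrow> q \<in> polyring n \<Longrightarrow> p*q \<in> polyring n"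
  unfolding polyring_mideal by (erule mideal_mult, assumption) simp

lemma polyring_add: "p \<in> polyring n \<Longrightarrow> q \<in> polyring n \<Longrightarrow> p+q \<in> polyring n"
  unfolding polyring_mideal by (rule mideal_add)

lemma polyring_zero: "0 \<in> polyring n"
  unfolding polyring_mideal by (rule mideal_zero)

lemma polyring_const: "Poly_Mapping.single 0 c \<in> polyring n"
  by (simp add: polyring_def)

lemma polyring_one: "1 \<in> polyring n"
  by (simp add: polyring_def)

lemma gi_base: "a \<in> A \<Longrightarrow> a \<in> gen_ideal n A"
  unfolding gen_ideal_def
  by (rule CollectI, rule exI[of _ "{a}"], rule exI[of _ "\<lambda>_. 1"]) (auto simp: polyring_one)

lemma gi_zero: "0 \<in> gen_ideal n A"
  unfolding gen_ideal_def
  by (rule CollectI, rule exI[of _ "{}"], rule exI[of _ "\<lambda>_. 1"]) auto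

lemma gi_add: assumes "p \<in> gen_ideal n A" "q \<in> gen_ideal n A" shows "p + q \<in> gen_ideal n A"
proof -
  obtain F r where F: "p = (\<Sum>a\<in>F. r a * a)" "finite F" "F \<subseteq> A" "\<forall>a\<in>F. r a \<in> polyring n"
    using assms(1) unfolding gen_ideal_def by blast
  obtain G s where G: "q = (\<Sum>a\<in>G. s a * a)" "finite G" "G \<subseteq> A" "\<forall>a\<in>G. s a \<in> polyring n"
    using assms(2) unfolding gen_ideal_def by blast
  define t where "t a = (if a \<in> F then r a else 0) + (if a \<in> G then s a else 0)" for a
  have 1: "(\<Sum>a\<in>F\<union>G. (if a\<in>F then r a * a else 0)) = (\<Sum>a\<in>F. r a * a)"
    using F G by (simp add: sum.If_cases Int_absorb1)
  have 2: "(\<Sum>a\<in>F\<union>G. (if a\<in>G then s a * a else 0)) = (\<Sum>a\<in>G. s a * a)"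
    using F G by (simp add: sum.If_cases Int_absorb1)
  have "(\<Sum>a\<in>F\<union>G. t a * a) = (\<Sum>a\<in>F\<union>G. (if a\<in>F then r a * a else 0)) + (\<Sum>a\<in>F\<union>G. (if a\<in>G then s a * a else 0))"
    unfolding sum.distrib[symmetric] by (rule sum.cong) (auto simp: t_def distrib_right)
  also have "\<dots> = p + q" using 1 2 F G by simp
  finally have eq: "p + q = (\<Sum>a\<in>F\<union>G. t a * a)" by simp
  have "\<forall>a\<in>F\<union>G. t a \<in> polyring n" using F G
    by (auto simp: t_def intro!: polyring_add polyring_zero)
  then show ?thesis unfolding gen_ideal_def eq
    by (intro CollectI exI[of _ "F \<union> G"] exI[of _ t]) (use F G in auto)
qed

lemma gi_mult: assumes "q \<in> polyring n" "p \<in> gen_ideal n A" shows "q * p \<in> gen_ideal n A"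
proof -
  obtain F r where F: "p = (\<Sum>a\<in>F. r a * a)" "finite F" "F \<subseteq> A" "\<forall>a\<in>F. r a \<in> polyring n"
    using assms(2) unfolding gen_ideal_def by blast
  have "q * p = (\<Sum>a\<in>F. (q * r a) * a)" using F by (simp add: sum_distrib_left mult.assoc)
  moreover have "\<forall>a\<in>F. q * r a \<in> polyring n" using F assms(1) by (auto intro: polyring_mult)
  ultimately show ?thesis unfolding gen_ideal_def
    by (intro CollectI exI[of _ F] exI[of _ "\<lambda>a. q * r a"]) (use F in auto)
qed

lemma gi_sum: "(\<And>x. x \<in> F \<Longrightarrow> f x \<in> gen_ideal n A) \<Longrightarrow> sum f F \<in> gen_ideal n A"
  by (induction F rule: infinite_finite_induct) (auto simp: gi_zero gi_add)

lemma gi_sub_mideal: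
  assumes "\<And>a. a \<in> A \<Longrightarrow> a \<in> mideal n U" "upcl n U"
  shows "gen_ideal n A \<subseteq> mideal n U"
proof
  fix p assume "p \<in> gen_ideal n A"
  then obtain F r where F: "p = (\<Sum>a\<in>F. r a * a)" "finite F" "F \<subseteq> A" "\<forall>a\<in>F. r a \<in> polyring n"
    unfolding gen_ideal_def by blast
  have "r a * a \<in> mideal n U" if "a \<in> F" for a
  proof (rule mideal_mult[of _ n "\<lambda>_. True" _ U])
    show "r a \<in> mideal n (\<lambda>_. True)" using F that polyring_mideal by blast
    show "a \<in> mideal n U" using F that assms by blast
    show "U (\<mu> + \<nu>)" if "Poly_Mapping.keys \<mu> \<subseteq> {1..n}" "U \<nu>" for \<mu> \<nu>
      using assms(2) that unfolding upcl_def by (metis add.commute)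
  qed
  then show "p \<in> mideal n U" unfolding F(1) by (rule mideal_sum)
qed

lemma mideal_sub_gi:
  fixes A :: "('a::comm_ring_1) mpoly set"
  assumes "\<And>\<mu>. Poly_Mapping.keys \<mu> \<subseteq> {1..n} \<Longrightarrow> U \<mu> \<Longrightarrow> Poly_Mapping.single \<mu> (1::'a) \<in> gen_ideal n A"
  shows "mideal n U \<subseteq> gen_ideal n A"
proof
  fix p :: "'a mpoly" assume p: "p \<in> mideal n U"
  have "p = (\<Sum>\<mu>\<in>Poly_Mapping.keys p. Poly_Mapping.single \<mu> (Poly_Mapping.lookup p \<mu>))"
    by (rule poly_mapping_eqI) (simp add: lookup_sum lookup_single when_def in_keys_iff)
  also have "\<dots> \<in> gen_ideal n A"
  proof (rule gi_sum)
    fix \<mu> assume m: "\<mu> \<in> Poly_Mapping.keys p"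
    have "Poly_Mapping.single \<mu> (Poly_Mapping.lookup p \<mu>) = Poly_Mapping.single 0 (Poly_Mapping.lookup p \<mu>) * Poly_Mapping.single \<mu> 1"
      by (simp add: mult_single)
    moreover have "Poly_Mapping.single \<mu> 1 \<in> gen_ideal n A"
      using assms m p unfolding mideal_def by blast
    ultimately show "Poly_Mapping.single \<mu> (Poly_Mapping.lookup p \<mu>) \<in> gen_ideal n A"
      using polyring_const gi_mult by metis
  qed
  finally show "p \<in> gen_ideal n A" .
qed




lemma keys_minus_sub: "Poly_Mapping.keys ((\<mu>::nat \<Rightarrow>\<^sub>0 nat) - \<nu>) \<subseteq> Poly_Mapping.keys \<mu>"
  by (auto simp: in_keys_iff lookup_minus)

lemma single_one_keys: "Poly_Mapping.keys (Poly_Mapping.single \<mu> (1::'a::field)) = {\<mu>}"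
  by simp

lemma single_in_mideal: "Poly_Mapping.single \<mu> (1::'a::field) \<in> mideal n U \<longleftrightarrow> Poly_Mapping.keys \<mu> \<subseteq> {1..n} \<and> U \<mu>"
  by (simp add: mideal_def)

lemma mideal_cong: "(\<And>\<mu>. U \<mu> = V \<mu>) \<Longrightarrow> mideal n U = mideal n V"
  by (simp add: mideal_def)

lemma edge_pow:
  assumes "i \<in> {1..n}" "j \<in> {1..n}" "i \<noteq> j"
  shows "ideal_pow n (gen_ideal n {var i, var j} :: 'a::field mpoly set) m
         = mideal n (\<lambda>\<mu>. m \<le> Poly_Mapping.lookup \<mu> i + Poly_Mapping.lookup \<mu> j)"
proof (induction m)
  case 0 show ?case by (simp add: polyring_mideal)
next
  case (Suc m)
  let ?G = "gen_ideal n {var i, var j} :: 'a mpoly set"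
  have G: "?G \<subseteq> mideal n (\<lambda>\<mu>. 1 \<le> Poly_Mapping.lookup \<mu> i + Poly_Mapping.lookup \<mu> j)"
    by (rule gi_sub_mideal) (use assms in \<open>auto simp: var_def mideal_def upcl_def lookup_add\<close>)
  have up: "upcl n (\<lambda>\<mu>. Suc m \<le> Poly_Mapping.lookup \<mu> i + Poly_Mapping.lookup \<mu> j)"
    by (auto simp: upcl_def lookup_add)
  show ?case
  proof
    show "ideal_pow n ?G (Suc m) \<subseteq> mideal n (\<lambda>\<mu>. Suc m \<le> Poly_Mapping.lookup \<mu> i + Poly_Mapping.lookup \<mu> j)"
      unfolding ideal_pow.simps ideal_prod_def Suc.IH
    proof (rule gi_sub_mideal[OF _ up])
      fix a assume "a \<in> {a * b |a b. a \<in> mideal n (\<lambda>\<mu>. m \<le> Poly_Mapping.lookup \<mu> i + Poly_Mapping.lookup \<mu> j) \<and> b \<in> ?G}"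
      then obtain x y where "a = x * y" "x \<in> mideal n (\<lambda>\<mu>. m \<le> Poly_Mapping.lookup \<mu> i + Poly_Mapping.lookup \<mu> j)"
        "y \<in> mideal n (\<lambda>\<mu>. 1 \<le> Poly_Mapping.lookup \<mu> i + Poly_Mapping.lookup \<mu> j)" using G by blast
      then show "a \<in> mideal n (\<lambda>\<mu>. Suc m \<le> Poly_Mapping.lookup \<mu> i + Poly_Mapping.lookup \<mu> j)"
        by (auto intro!: mideal_mult simp: lookup_add)
    qed
    show "mideal n (\<lambda>\<mu>. Suc m \<le> Poly_Mapping.lookup \<mu> i + Poly_Mapping.lookup \<mu> j) \<subseteq> ideal_pow n ?G (Suc m)"
      unfolding ideal_pow.simps ideal_prod_def Suc.IH
    proof (rule mideal_sub_gi)
      fix \<mu> :: "nat \<Rightarrow>\<^sub>0 nat" assume \<mu>: "Poly_Mapping.keys \<mu> \<subseteq> {1..n}" "Suc m \<le> Poly_Mapping.lookup \<mu> i + Poly_Mapping.lookup \<mu> j"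
      obtain k where k: "k \<in> {i,j}" "1 \<le> Poly_Mapping.lookup \<mu> k"
        "m \<le> Poly_Mapping.lookup (\<mu> - Poly_Mapping.single k 1) i + Poly_Mapping.lookup (\<mu> - Poly_Mapping.single k 1) j"
      proof (cases "1 \<le> Poly_Mapping.lookup \<mu> i")
        case True
        then show ?thesis using \<mu> assms by (intro that[of i]) (auto simp: lookup_minus lookup_single when_def)
      next
        case False
        then show ?thesis using \<mu> assms by (intro that[of j]) (auto simp: lookup_minus lookup_single when_def)
      qed
      have eq: "\<mu> - Poly_Mapping.single k 1 + Poly_Mapping.single k 1 = \<mu>"
        by (rule poly_mapping_eqI) (use k in \<open>auto simp: lookup_minus lookup_single lookup_add when_def\<close>)
      have "Poly_Mapping.single \<mu> (1::'a) = Poly_Mapping.single (\<mu> - Poly_Mapping.single k 1) 1 * var k"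
        unfolding var_def mult_single eq by simp
      moreover have "Poly_Mapping.single (\<mu> - Poly_Mapping.single k 1) (1::'a) \<in> mideal n (\<lambda>\<mu>. m \<le> Poly_Mapping.lookup \<mu> i + Poly_Mapping.lookup \<mu> j)"
        unfolding single_in_mideal using k \<mu> keys_minus_sub[of \<mu>] by blast
      moreover have "var k \<in> ?G" using k by (auto intro: gi_base)
      ultimately show "Poly_Mapping.single \<mu> (1::'a) \<in> gen_ideal n {a * b |a b. a \<in> mideal n (\<lambda>\<mu>. m \<le> Poly_Mapping.lookup \<mu> i + Poly_Mapping.lookup \<mu> j) \<and> b \<in> ?G}"
        by (intro gi_base) blast
    qed
  qed
qed

definition esum :: "nat set set \<Rightarrow> nat \<Rightarrow> (nat \<Rightarrow> nat) \<Rightarrow> bool" where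
  "esum E m \<alpha> \<longleftrightarrow> (\<forall>e\<in>E. \<forall>i\<in>e. \<forall>j\<in>e. i \<noteq> j \<longrightarrow> m \<le> \<alpha> i + \<alpha> j)"

lemma symb_pow_char:
  assumes "simple_graph_on n E"
  shows "cover_symb_pow n E m = (mideal n (\<lambda>\<mu>. esum E m (Poly_Mapping.lookup \<mu>)) :: 'a::field mpoly set)"
proof -
  have e: "ideal_pow n (gen_ideal n (var ` e)) m = (mideal n (\<lambda>\<mu>. \<forall>i\<in>e. \<forall>j\<in>e. i \<noteq> j \<longrightarrow> m \<le> Poly_Mapping.lookup \<mu> i + Poly_Mapping.lookup \<mu> j) :: 'a mpoly set)" if "e \<in> E" for e
  proof -
    from assms that obtain i j where ij: "e = {i,j}" "i\<noteq>j" "i\<in>{1..n}" "j\<in>{1..n}" by (auto simp: simple_graph_on_def)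
    have "ideal_pow n (gen_ideal n (var ` e)) m = (mideal n (\<lambda>\<mu>. m \<le> Poly_Mapping.lookup \<mu> i + Poly_Mapping.lookup \<mu> j) :: 'a mpoly set)"
      using edge_pow[OF ij(3,4,2), of m] ij(1) by simp
    also have "\<dots> = mideal n (\<lambda>\<mu>. \<forall>i\<in>e. \<forall>j\<in>e. i \<noteq> j \<longrightarrow> m \<le> Poly_Mapping.lookup \<mu> i + Poly_Mapping.lookup \<mu> j)"
      by (rule mideal_cong) (use ij in \<open>auto simp: add.commute\<close>)
    finally show ?thesis .
  qed
  show ?thesis unfolding cover_symb_pow_def polyring_mideal using e
    by (auto simp: mideal_def esum_def)
qed




definition ind :: "nat set \<Rightarrow> (nat \<Rightarrow>\<^sub>0 nat)" where
  "ind C = (\<Sum>i\<in>C. Poly_Mapping.single i 1)"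

lemma lookup_ind: "finite C \<Longrightarrow> Poly_Mapping.lookup (ind C) x = (if x \<in> C then 1 else 0)"
  by (simp add: ind_def lookup_sum lookup_single when_def)

lemma keys_ind: "finite C \<Longrightarrow> Poly_Mapping.keys (ind C) = C"
  by (auto simp: in_keys_iff lookup_ind split: if_splits)

lemma prod_var: "finite C \<Longrightarrow> (\<Prod>i\<in>C. var i) = (Poly_Mapping.single (ind C) 1 :: 'a::comm_ring_1 mpoly)"
proof (induction C rule: finite_induct)
  case empty then show ?case by (simp add: ind_def)
next
  case (insert x F)
  then show ?case by (simp add: ind_def var_def mult_single)
qed

fun cov :: "nat \<Rightarrow> nat set set \<Rightarrow> nat \<Rightarrow> (nat \<Rightarrow> nat) \<Rightarrow> bool" where
  "cov n E 0 \<alpha> = True"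
| "cov n E (Suc k) \<alpha> = (\<exists>C \<beta>. vertex_cover n E C \<and> cov n E k \<beta> \<and> (\<forall>i. \<beta> i + (if i \<in> C then 1 else 0) \<le> \<alpha> i))"

lemma cov_mono: "cov n E k \<alpha> \<Longrightarrow> (\<And>i. \<alpha> i \<le> \<gamma> i) \<Longrightarrow> cov n E k \<gamma>"
proof (induction k arbitrary: \<alpha> \<gamma>)
  case 0 then show ?case by simp
next
  case (Suc k)
  then obtain C \<beta> where "vertex_cover n E C" "cov n E k \<beta>" "\<forall>i. \<beta> i + (if i \<in> C then 1 else 0) \<le> \<alpha> i" by auto
  moreover have "\<forall>i. \<beta> i + (if i \<in> C then 1 else 0) \<le> \<gamma> i"
    using calculation(3) Suc.prems(2) le_trans by blast
  ultimately show ?case by (simp only: cov.simps) blast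
qed

lemma cov_add: "cov n E a \<alpha> \<Longrightarrow> cov n E b \<beta> \<Longrightarrow> cov n E (a+b) (\<lambda>i. \<alpha> i + \<beta> i)"
proof (induction a arbitrary: \<alpha>)
  case 0 then show ?case using cov_mono[of n E b \<beta> "\<lambda>i. \<alpha> i + \<beta> i"] by simp
next
  case (Suc a)
  then obtain C \<gamma> where C: "vertex_cover n E C" "cov n E a \<gamma>" "\<forall>i. \<gamma> i + (if i \<in> C then 1 else 0) \<le> \<alpha> i" by auto
  then have "cov n E (a+b) (\<lambda>i. \<gamma> i + \<beta> i)" using Suc by blast
  moreover have "\<forall>i. (\<gamma> i + \<beta> i) + (if i \<in> C then 1 else 0) \<le> \<alpha> i + \<beta> i"
  proof
    fix i from C(3) have "\<gamma> i + (if i \<in> C then 1 else 0) \<le> \<alpha> i" by blast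
    then show "(\<gamma> i + \<beta> i) + (if i \<in> C then 1 else 0) \<le> \<alpha> i + \<beta> i" by linarith
  qed
  ultimately show ?case using C(1) by (simp only: add_Suc cov.simps) blast
qed

lemma cov_down: "cov n E (Suc k) \<alpha> \<Longrightarrow> cov n E k \<alpha>"
proof (induction k arbitrary: \<alpha>)
  case 0 then show ?case by simp
next
  case (Suc k)
  then obtain C \<beta> where "vertex_cover n E C" "cov n E (Suc k) \<beta>" "\<forall>i. \<beta> i + (if i \<in> C then 1 else 0) \<le> \<alpha> i"
    by (metis cov.simps(2))
  then show ?case using Suc.IH by (simp only: cov.simps) blast
qed

lemma lookup_plus_fun: "Poly_Mapping.lookup ((\<mu>::nat\<Rightarrow>\<^sub>0nat) + \<nu>) = (\<lambda>i. Poly_Mapping.lookup \<mu> i + Poly_Mapping.lookup \<nu> i)"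
  by (simp add: lookup_add fun_eq_iff)

lemma upcl_cov: "upcl n (\<lambda>\<mu>. cov n E k (Poly_Mapping.lookup \<mu>))"
  unfolding upcl_def lookup_plus_fun by (auto elim: cov_mono)

lemma vc_finite: "vertex_cover n E C \<Longrightarrow> finite C"
  by (auto simp: vertex_cover_def intro: finite_subset)

lemma cover_pow_char:
  fixes I :: "'a::field mpoly set"
  assumes I: "I = cover_ideal n E"
  shows "ideal_pow n I k = mideal n (\<lambda>\<mu>. cov n E k (Poly_Mapping.lookup \<mu>))"
proof (induction k)
  case 0 show ?case by (simp add: polyring_mideal)
next
  case (Suc k)
  have G: "I \<subseteq> mideal n (\<lambda>\<mu>. cov n E 1 (Poly_Mapping.lookup \<mu>))"
    unfolding I cover_ideal_def
  proof (rule gi_sub_mideal[OF _ upcl_cov])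
    fix a :: "'a mpoly" assume "a \<in> {\<Prod>i\<in>C. var i |C. vertex_cover n E C}"
    then obtain C where C: "a = (\<Prod>i\<in>C. var i)" "vertex_cover n E C" by blast
    have f: "finite C" using C vc_finite by blast
    have "cov n E 1 (Poly_Mapping.lookup (ind C))"
      using C f by (auto simp: lookup_ind intro!: exI[of _ C])
    moreover have "Poly_Mapping.keys (ind C) \<subseteq> {1..n}" using keys_ind[OF f] C(2) by (simp add: vertex_cover_def)
    ultimately have "Poly_Mapping.single (ind C) (1::'a) \<in> mideal n (\<lambda>\<mu>. cov n E 1 (Poly_Mapping.lookup \<mu>))"
      unfolding single_in_mideal by blast
    then show "a \<in> mideal n (\<lambda>\<mu>. cov n E 1 (Poly_Mapping.lookup \<mu>))"
      unfolding C(1) prod_var[OF f] .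
  qed
  show ?case
  proof
    show "ideal_pow n I (Suc k) \<subseteq> mideal n (\<lambda>\<mu>. cov n E (Suc k) (Poly_Mapping.lookup \<mu>))"
      unfolding ideal_pow.simps ideal_prod_def Suc.IH
    proof (rule gi_sub_mideal[OF _ upcl_cov])
      fix a assume "a \<in> {a * b |a b. a \<in> mideal n (\<lambda>\<mu>. cov n E k (Poly_Mapping.lookup \<mu>)) \<and> b \<in> I}"
      then obtain x y where axy: "a = x * y" and xy: "x \<in> mideal n (\<lambda>\<mu>. cov n E k (Poly_Mapping.lookup \<mu>))"
        "y \<in> mideal n (\<lambda>\<mu>. cov n E 1 (Poly_Mapping.lookup \<mu>))" using G by blast
      show "a \<in> mideal n (\<lambda>\<mu>. cov n E (Suc k) (Poly_Mapping.lookup \<mu>))"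
        unfolding axy
      proof (rule mideal_mult[OF xy])
        fix \<mu> \<nu> :: "nat \<Rightarrow>\<^sub>0 nat"
        assume "cov n E k (Poly_Mapping.lookup \<mu>)" "cov n E 1 (Poly_Mapping.lookup \<nu>)"
        from cov_add[OF this] show "cov n E (Suc k) (Poly_Mapping.lookup (\<mu> + \<nu>))"
          unfolding lookup_plus_fun Suc_eq_plus1 .
      qed
    qed
    show "mideal n (\<lambda>\<mu>. cov n E (Suc k) (Poly_Mapping.lookup \<mu>)) \<subseteq> ideal_pow n I (Suc k)"
      unfolding ideal_pow.simps ideal_prod_def Suc.IH
    proof (rule mideal_sub_gi)
      fix \<mu> :: "nat \<Rightarrow>\<^sub>0 nat" assume \<mu>: "Poly_Mapping.keys \<mu> \<subseteq> {1..n}" "cov n E (Suc k) (Poly_Mapping.lookup \<mu>)"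
      then obtain C \<beta> where C: "vertex_cover n E C" "cov n E k \<beta>" "\<forall>i. \<beta> i + (if i \<in> C then 1 else 0) \<le> Poly_Mapping.lookup \<mu> i"
        by auto
      have f: "finite C" using C vc_finite by blast
      have eq: "\<mu> - ind C + ind C = \<mu>"
      proof (rule poly_mapping_eqI)
        fix i have "\<beta> i + (if i \<in> C then 1 else 0) \<le> Poly_Mapping.lookup \<mu> i" using C(3) by blast
        then show "Poly_Mapping.lookup (\<mu> - ind C + ind C) i = Poly_Mapping.lookup \<mu> i"
          by (auto simp: lookup_minus lookup_add lookup_ind[OF f] split: if_splits)
      qed
      have "Poly_Mapping.single \<mu> (1::'a) = Poly_Mapping.single (\<mu> - ind C) 1 * (\<Prod>i\<in>C. var i)"
        unfolding prod_var[OF f] mult_single eq by simp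
      moreover have "cov n E k (Poly_Mapping.lookup (\<mu> - ind C))"
      proof (rule cov_mono[OF C(2)])
        fix i have "\<beta> i + (if i \<in> C then 1 else 0) \<le> Poly_Mapping.lookup \<mu> i" using C(3) by blast
        then show "\<beta> i \<le> Poly_Mapping.lookup (\<mu> - ind C) i"
          by (auto simp: lookup_minus lookup_ind[OF f] split: if_splits)
      qed
      then have "Poly_Mapping.single (\<mu> - ind C) (1::'a) \<in> mideal n (\<lambda>\<mu>. cov n E k (Poly_Mapping.lookup \<mu>))"
        unfolding single_in_mideal using \<mu> keys_minus_sub[of \<mu>] by blast
      moreover have "(\<Prod>i\<in>C. var i) \<in> I" unfolding I cover_ideal_def using C by (auto intro: gi_base)
      ultimately show "Poly_Mapping.single \<mu> (1::'a) \<in> gen_ideal n {a * b |a b. a \<in> mideal n (\<lambda>\<mu>. cov n E k (Poly_Mapping.lookup \<mu>)) \<and> b \<in> I}"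
        by (intro gi_base) blast
    qed
  qed
qed




lemma cov1:
  assumes g: "simple_graph_on n E" and es: "esum E 1 \<alpha>"
  shows "cov n E 1 \<alpha>"
proof -
  let ?C = "{i\<in>{1..n}. 1 \<le> \<alpha> i}"
  have vc: "vertex_cover n E ?C"
    unfolding vertex_cover_def
  proof (intro conjI ballI)
    show "?C \<subseteq> {1..n}" by auto
    fix e assume e: "e\<in>E"
    have "\<exists>i j. e = {i, j} \<and> i \<noteq> j \<and> i \<in> {1..n} \<and> j \<in> {1..n}"
      using g e unfolding simple_graph_on_def by (rule bspec)
    then obtain i j where ij: "e={i,j}" "i\<noteq>j" "i\<in>{1..n}" "j\<in>{1..n}" by blast
    have ie: "i \<in> e" "j \<in> e" using ij(1) by auto
    have "\<forall>i\<in>e. \<forall>j\<in>e. i \<noteq> j \<longrightarrow> 1 \<le> \<alpha> i + \<alpha> j" using es e unfolding esum_def by (rule bspec)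
    then have "1 \<le> \<alpha> i + \<alpha> j" using ie ij(2) by blast
    then show "?C \<inter> e \<noteq> {}" using ij by auto
  qed
  have le: "\<forall>i. (\<lambda>_. 0::nat) i + (if i \<in> ?C then 1 else 0) \<le> \<alpha> i" by auto
  have "cov n E (Suc 0) \<alpha>" unfolding cov.simps
    by (intro exI[of _ ?C] exI[of _ "\<lambda>_. 0::nat"] conjI TrueI vc le)
  then show ?thesis by simp
qed

lemma ar1: "q+2 \<le> a+b \<Longrightarrow> 2 \<le> ((if 1 \<le> a then 1 else 0) + (if q+2 \<le> a then 1 else 0)) + ((if 1 \<le> b then 1 else 0) + (if q+2 \<le> b then 1 else 0::nat))"
  for a b q :: nat by (auto split: if_splits)

lemma ar2: "q+2 \<le> a+b \<Longrightarrow> q \<le> (a - ((if 1 \<le> a then 1 else 0) + (if q+2 \<le> a then 1 else 0))) + (b - ((if 1 \<le> b then 1 else 0) + (if q+2 \<le> b then 1 else 0::nat)))"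
  for a b q :: nat by (auto split: if_splits)

lemma split_mono:
  fixes \<mu> :: "nat \<Rightarrow>\<^sub>0 nat"
  assumes es: "esum E (q+2) (Poly_Mapping.lookup \<mu>)"
  shows "\<exists>d \<mu>'. Poly_Mapping.lookup \<mu> = (\<lambda>i. Poly_Mapping.lookup d i + Poly_Mapping.lookup \<mu>' i)
     \<and> Poly_Mapping.keys d \<subseteq> Poly_Mapping.keys \<mu> \<and> Poly_Mapping.keys \<mu>' \<subseteq> Poly_Mapping.keys \<mu>
     \<and> esum E 2 (Poly_Mapping.lookup d) \<and> esum E q (Poly_Mapping.lookup \<mu>')"
proof -
  define A where "A = {i\<in>Poly_Mapping.keys \<mu>. q+2 \<le> Poly_Mapping.lookup \<mu> i}"
  have fA: "finite A" "finite (Poly_Mapping.keys \<mu>)" by (auto simp: A_def)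
  define d where "d = ind (Poly_Mapping.keys \<mu>) + ind A"
  have ld: "Poly_Mapping.lookup d i = (if 1 \<le> Poly_Mapping.lookup \<mu> i then 1 else 0) + (if q+2 \<le> Poly_Mapping.lookup \<mu> i then 1 else 0)" for i
    unfolding d_def lookup_add lookup_ind[OF fA(1)] lookup_ind[OF fA(2)] by (auto simp: A_def in_keys_iff)
  define \<mu>' where "\<mu>' = \<mu> - d"
  have lm: "Poly_Mapping.lookup \<mu>' i = Poly_Mapping.lookup \<mu> i - Poly_Mapping.lookup d i" for i
    by (simp add: \<mu>'_def lookup_minus)
  have le: "Poly_Mapping.lookup d i \<le> Poly_Mapping.lookup \<mu> i" for i unfolding ld by auto
    have r1: "Poly_Mapping.lookup \<mu> = (\<lambda>i. Poly_Mapping.lookup d i + Poly_Mapping.lookup \<mu>' i)"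
    proof (rule ext)
      fix i show "Poly_Mapping.lookup \<mu> i = Poly_Mapping.lookup d i + Poly_Mapping.lookup \<mu>' i"
        using le[of i] unfolding lm by simp
    qed
    have r2: "Poly_Mapping.keys d \<subseteq> Poly_Mapping.keys \<mu>" 
    proof
      fix x assume "x \<in> Poly_Mapping.keys d" then show "x \<in> Poly_Mapping.keys \<mu>" using le[of x] by (simp add: in_keys_iff)
    qed
    have r3: "Poly_Mapping.keys \<mu>' \<subseteq> Poly_Mapping.keys \<mu>" unfolding \<mu>'_def by (rule keys_minus_sub)
    have r4: "esum E 2 (Poly_Mapping.lookup d)"
      unfolding esum_def
    proof (intro ballI impI)
      fix e a b assume "e \<in> E" "a \<in> e" "b \<in> e" "a \<noteq> b"
      then have "q+2 \<le> Poly_Mapping.lookup \<mu> a + Poly_Mapping.lookup \<mu> b" using es unfolding esum_def by blast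
      from ar1[OF this] show "2 \<le> Poly_Mapping.lookup d a + Poly_Mapping.lookup d b" unfolding ld .
    qed
    have r5: "esum E q (Poly_Mapping.lookup \<mu>')"
      unfolding esum_def
    proof (intro ballI impI)
      fix e a b assume "e \<in> E" "a \<in> e" "b \<in> e" "a \<noteq> b"
      then have "q+2 \<le> Poly_Mapping.lookup \<mu> a + Poly_Mapping.lookup \<mu> b" using es unfolding esum_def by blast
      from ar2[OF this] show "q \<le> Poly_Mapping.lookup \<mu>' a + Poly_Mapping.lookup \<mu>' b" unfolding lm ld .
    qed
  show ?thesis by (rule exI[of _ d], rule exI[of _ \<mu>'], intro conjI r1 r2 r3 r4 r5)
qed

lemma main_comb:
  assumes graph: "simple_graph_on n E"
    and H: "\<And>\<mu> \<nu>. Poly_Mapping.keys \<mu> \<subseteq> {1..n} \<Longrightarrow> Poly_Mapping.keys \<nu> \<subseteq> {1..n} \<Longrightarrow>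
      esum E 2 (Poly_Mapping.lookup \<mu>) \<Longrightarrow> esum E 2 (Poly_Mapping.lookup \<nu>) \<Longrightarrow>
      cov n E 3 (\<lambda>i. Poly_Mapping.lookup \<mu> i + Poly_Mapping.lookup \<nu> i)"
  shows "1 \<le> p \<Longrightarrow> Poly_Mapping.keys \<mu> \<subseteq> {1..n} \<Longrightarrow> Poly_Mapping.keys \<nu> \<subseteq> {1..n} \<Longrightarrow>
    esum E p (Poly_Mapping.lookup \<mu>) \<Longrightarrow> esum E p (Poly_Mapping.lookup \<nu>) \<Longrightarrow>
    cov n E (Suc p) (\<lambda>i. Poly_Mapping.lookup \<mu> i + Poly_Mapping.lookup \<nu> i)"
proof (induction p arbitrary: \<mu> \<nu> rule: less_induct)
  case (less p)
  consider "p = 1" | "p = 2" | q where "p = q + 2" "1 \<le> q"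
  proof -
    assume a: "p = 1 \<Longrightarrow> thesis" "p = 2 \<Longrightarrow> thesis" "\<And>q. p = q + 2 \<Longrightarrow> 1 \<le> q \<Longrightarrow> thesis"
    show thesis
    proof (cases "p \<le> 2")
      case True then show ?thesis using a less.prems(1) by linarith
    next
      case False then show ?thesis using a(3)[of "p - 2"] by simp
    qed
  qed
  then show ?case
  proof cases
    case 1
    have "cov n E 1 (Poly_Mapping.lookup \<mu>)" "cov n E 1 (Poly_Mapping.lookup \<nu>)"
      using cov1[OF graph] less.prems 1 by auto
    from cov_add[OF this] show ?thesis using 1 by simp
  next
    case 2
    have "Suc p = 3" using 2 by simp
    then show ?thesis using H less.prems 2 by simp
  next
    case 3
    obtain d \<mu>' where d: "Poly_Mapping.lookup \<mu> = (\<lambda>i. Poly_Mapping.lookup d i + Poly_Mapping.lookup \<mu>' i)"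
      "Poly_Mapping.keys d \<subseteq> Poly_Mapping.keys \<mu>" "Poly_Mapping.keys \<mu>' \<subseteq> Poly_Mapping.keys \<mu>"
      "esum E 2 (Poly_Mapping.lookup d)" "esum E q (Poly_Mapping.lookup \<mu>')"
      using split_mono[of E q \<mu>] less.prems 3 by blast
    obtain d' \<nu>' where d': "Poly_Mapping.lookup \<nu> = (\<lambda>i. Poly_Mapping.lookup d' i + Poly_Mapping.lookup \<nu>' i)"
      "Poly_Mapping.keys d' \<subseteq> Poly_Mapping.keys \<nu>" "Poly_Mapping.keys \<nu>' \<subseteq> Poly_Mapping.keys \<nu>"
      "esum E 2 (Poly_Mapping.lookup d')" "esum E q (Poly_Mapping.lookup \<nu>')"
      using split_mono[of E q \<nu>] less.prems 3 by blast
    have c1: "cov n E (Suc q) (\<lambda>i. Poly_Mapping.lookup \<mu>' i + Poly_Mapping.lookup \<nu>' i)"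
      using less.IH[of q \<mu>' \<nu>'] 3 d d' less.prems by auto
    have c2: "cov n E 3 (\<lambda>i. Poly_Mapping.lookup d i + Poly_Mapping.lookup d' i)"
      using H d d' less.prems by blast
    from cov_add[OF c2 c1] have A: "cov n E (3 + Suc q)
       (\<lambda>i. (Poly_Mapping.lookup d i + Poly_Mapping.lookup d' i) + (Poly_Mapping.lookup \<mu>' i + Poly_Mapping.lookup \<nu>' i))" .
    have eqn: "3 + Suc q = Suc (Suc p)" using 3 by simp
    have eqf: "(\<lambda>i. (Poly_Mapping.lookup d i + Poly_Mapping.lookup d' i) + (Poly_Mapping.lookup \<mu>' i + Poly_Mapping.lookup \<nu>' i))
      = (\<lambda>i. Poly_Mapping.lookup \<mu> i + Poly_Mapping.lookup \<nu> i)"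
      by (simp add: d(1) d'(1) fun_eq_iff)
    from A have "cov n E (Suc (Suc p)) (\<lambda>i. Poly_Mapping.lookup \<mu> i + Poly_Mapping.lookup \<nu> i)"
      unfolding eqn eqf .
    then show ?thesis by (rule cov_down)
  qed
qed

lemma upcl_esum: "upcl n (\<lambda>\<mu>. esum E m (Poly_Mapping.lookup \<mu>))"
  unfolding upcl_def esum_def lookup_plus_fun
proof (intro allI impI ballI)
  fix \<mu> \<nu> :: "nat \<Rightarrow>\<^sub>0 nat" and e i j
  assume "\<forall>e\<in>E. \<forall>i\<in>e. \<forall>j\<in>e. i \<noteq> j \<longrightarrow> m \<le> Poly_Mapping.lookup \<mu> i + Poly_Mapping.lookup \<mu> j"
    "e \<in> E" "i \<in> e" "j \<in> e" "i \<noteq> j"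
  then have "m \<le> Poly_Mapping.lookup \<mu> i + Poly_Mapping.lookup \<mu> j" by blast
  then show "m \<le> (Poly_Mapping.lookup \<mu> i + Poly_Mapping.lookup \<nu> i) + (Poly_Mapping.lookup \<mu> j + Poly_Mapping.lookup \<nu> j)"
    by linarith
qed

lemma pow2_eq: "ideal_pow n S 2 = ideal_prod n (ideal_prod n (polyring n) S) S"
  by (simp add: numeral_2_eq_2)

lemma sq_sub:
  fixes S :: "'a::comm_ring_1 mpoly set"
  assumes S: "S \<subseteq> mideal n U" and uU: "upcl n U" and uW: "upcl n W"
    and UW: "\<And>\<mu> \<nu>. Poly_Mapping.keys \<mu> \<subseteq> {1..n} \<Longrightarrow> Poly_Mapping.keys \<nu> \<subseteq> {1..n} \<Longrightarrow> U \<mu> \<Longrightarrow> U \<nu> \<Longrightarrow> W (\<mu> + \<nu>)"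
  shows "ideal_pow n S 2 \<subseteq> mideal n W"
proof -
  have P: "ideal_prod n (polyring n) S \<subseteq> mideal n U"
    unfolding ideal_prod_def
  proof (rule gi_sub_mideal[OF _ uU])
    fix a :: "'a mpoly" assume "a \<in> {a * b |a b. a \<in> polyring n \<and> b \<in> S}"
    then obtain x y where axy: "a = x*y" and xy: "x \<in> mideal n (\<lambda>_. True)" "y \<in> mideal n U"
      using S polyring_mideal by blast
    show "a \<in> mideal n U" unfolding axy
    proof (rule mideal_mult[OF xy])
      fix \<mu> \<nu> :: "nat \<Rightarrow>\<^sub>0 nat" assume "Poly_Mapping.keys \<mu> \<subseteq> {1..n}" "U \<nu>"
      then show "U (\<mu>+\<nu>)" using uU unfolding upcl_def by (metis add.commute)
    qed
  qed
  show ?thesis unfolding pow2_eq ideal_prod_def[of n "ideal_prod n (polyring n) S" S]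
  proof (rule gi_sub_mideal[OF _ uW])
    fix a :: "'a mpoly" assume "a \<in> {a * b |a b. a \<in> ideal_prod n (polyring n) S \<and> b \<in> S}"
    then obtain x y where axy: "a = x*y" and xy: "x \<in> mideal n U" "y \<in> mideal n U"
      using S P by blast
    show "a \<in> mideal n W" unfolding axy by (rule mideal_mult[OF xy]) (rule UW; assumption)
  qed
qed

lemma pderiv_mideal:
  fixes f :: "'a::comm_ring_1 mpoly"
  assumes "f \<in> mideal n (\<lambda>\<mu>. esum E m (Poly_Mapping.lookup \<mu>))"
  shows "pderiv_var i f \<in> mideal n (\<lambda>\<mu>. esum E (m - 1) (Poly_Mapping.lookup \<mu>))"
  unfolding pderiv_var_def
proof (rule mideal_sum)
  fix \<mu> assume \<mu>: "\<mu> \<in> Poly_Mapping.keys f"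
  have k: "Poly_Mapping.keys \<mu> \<subseteq> {1..n}" "esum E m (Poly_Mapping.lookup \<mu>)" using assms \<mu> unfolding mideal_def by auto
  have "Poly_Mapping.keys (\<mu> - Poly_Mapping.single i 1) \<subseteq> {1..n}" using k keys_minus_sub by blast
  moreover have "esum E (m-1) (Poly_Mapping.lookup (\<mu> - Poly_Mapping.single i 1))"
    unfolding esum_def
  proof (intro ballI impI)
    fix e a b assume "e \<in> E" "a \<in> e" "b \<in> e" "a \<noteq> b"
    then have "m \<le> Poly_Mapping.lookup \<mu> a + Poly_Mapping.lookup \<mu> b" using k(2) unfolding esum_def by blast
    then show "m - 1 \<le> Poly_Mapping.lookup (\<mu> - Poly_Mapping.single i 1) a + Poly_Mapping.lookup (\<mu> - Poly_Mapping.single i 1) b"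
      using \<open>a \<noteq> b\<close> by (auto simp: lookup_minus lookup_single when_def)
  qed
  ultimately show "Poly_Mapping.single (\<mu> - Poly_Mapping.single i 1) (of_nat (Poly_Mapping.lookup \<mu> i) * Poly_Mapping.lookup f \<mu>)
      \<in> mideal n (\<lambda>\<mu>. esum E (m - 1) (Poly_Mapping.lookup \<mu>))"
    unfolding mideal_def by auto
qed




theorem proposition2p8:
  fixes n :: nat and E :: "nat set set"
    and I :: "('a::field_char_0) mpoly set"
  assumes graph: "simple_graph_on n E"
    and I_def: "I = cover_ideal n E"
    and hyp: "ideal_pow n (cover_symb_pow n E 2 :: 'a mpoly set) 2 \<subseteq> ideal_pow n I 3"
  shows "(\<forall>k\<ge>2. ideal_pow n (cover_symb_pow n E (k - 1) :: 'a mpoly set) 2 \<subseteq> ideal_pow n I k)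
    \<and> (\<forall>k\<ge>2. \<forall>J :: 'a mpoly set. homogeneous_ideal n J \<and> ideal_pow n I k \<subseteq> J
                 \<and> J \<subseteq> cover_symb_pow n E k \<longrightarrow> strongly_golod n J)"
proof -
  have Ik: "ideal_pow n I k = mideal n (\<lambda>\<mu>. cov n E k (Poly_Mapping.lookup \<mu>))" for k
    by (rule cover_pow_char[OF I_def])
  have Sm: "cover_symb_pow n E m = (mideal n (\<lambda>\<mu>. esum E m (Poly_Mapping.lookup \<mu>)) :: 'a mpoly set)" for m
    by (rule symb_pow_char[OF graph])
  have Hm: "cov n E 3 (\<lambda>i. Poly_Mapping.lookup \<mu> i + Poly_Mapping.lookup \<nu> i)"
    if "Poly_Mapping.keys \<mu> \<subseteq> {1..n}" "Poly_Mapping.keys \<nu> \<subseteq> {1..n}"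
      "esum E 2 (Poly_Mapping.lookup \<mu>)" "esum E 2 (Poly_Mapping.lookup \<nu>)" for \<mu> \<nu>
  proof -
    let ?S = "cover_symb_pow n E 2 :: 'a mpoly set"
    have s: "Poly_Mapping.single \<mu> (1::'a) \<in> ?S" "Poly_Mapping.single \<nu> (1::'a) \<in> ?S"
      unfolding Sm single_in_mideal using that by auto
    have "(1::'a mpoly) * Poly_Mapping.single \<mu> 1 \<in> {a * b |a b. a \<in> polyring n \<and> b \<in> ?S}"
      by (intro CollectI exI[of _ "1::'a mpoly"] exI[of _ "Poly_Mapping.single \<mu> (1::'a)"] conjI refl polyring_one s(1))
    then have "(1::'a mpoly) * Poly_Mapping.single \<mu> 1 \<in> ideal_prod n (polyring n) ?S"
      unfolding ideal_prod_def by (rule gi_base)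
    then have s1: "Poly_Mapping.single \<mu> (1::'a) \<in> ideal_prod n (polyring n) ?S" by simp
    have "Poly_Mapping.single \<mu> (1::'a) * Poly_Mapping.single \<nu> 1 \<in> {a * b |a b. a \<in> ideal_prod n (polyring n) ?S \<and> b \<in> ?S}"
      by (intro CollectI exI[of _ "Poly_Mapping.single \<mu> (1::'a)"] exI[of _ "Poly_Mapping.single \<nu> (1::'a)"] conjI refl s1 s(2))
    then have "Poly_Mapping.single \<mu> (1::'a) * Poly_Mapping.single \<nu> 1 \<in> ideal_pow n ?S 2"
      unfolding pow2_eq ideal_prod_def[of n "ideal_prod n (polyring n) ?S" ?S] by (rule gi_base)
    moreover have "Poly_Mapping.single \<mu> (1::'a) * Poly_Mapping.single \<nu> 1 = Poly_Mapping.single (\<mu> + \<nu>) 1"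
      by (simp add: mult_single)
    ultimately have "Poly_Mapping.single (\<mu> + \<nu>) (1::'a) \<in> ideal_pow n I 3" using hyp by auto
    then have "cov n E 3 (Poly_Mapping.lookup (\<mu> + \<nu>))" unfolding Ik single_in_mideal by blast
    then show ?thesis unfolding lookup_plus_fun .
  qed
  have part1: "ideal_pow n (cover_symb_pow n E (k - 1) :: 'a mpoly set) 2 \<subseteq> ideal_pow n I k"
    if k: "k \<ge> 2" for k
  proof -
    have "ideal_pow n (cover_symb_pow n E (k - 1) :: 'a mpoly set) 2 \<subseteq> mideal n (\<lambda>\<mu>. cov n E k (Poly_Mapping.lookup \<mu>))"
    proof (rule sq_sub[OF _ upcl_esum upcl_cov])
      show "cover_symb_pow n E (k-1) \<subseteq> (mideal n (\<lambda>\<mu>. esum E (k-1) (Poly_Mapping.lookup \<mu>)) :: 'a mpoly set)"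
        unfolding Sm by simp
      fix \<mu> \<nu> :: "nat \<Rightarrow>\<^sub>0 nat"
      assume a: "Poly_Mapping.keys \<mu> \<subseteq> {1..n}" "Poly_Mapping.keys \<nu> \<subseteq> {1..n}"
        "esum E (k-1) (Poly_Mapping.lookup \<mu>)" "esum E (k-1) (Poly_Mapping.lookup \<nu>)"
      have "cov n E (Suc (k-1)) (\<lambda>i. Poly_Mapping.lookup \<mu> i + Poly_Mapping.lookup \<nu> i)"
        by (rule main_comb[OF graph Hm]) (use k a in auto)
      moreover have "Suc (k-1) = k" using k by simp
      ultimately show "cov n E k (Poly_Mapping.lookup (\<mu> + \<nu>))" unfolding lookup_plus_fun by simp
    qed
    then show ?thesis unfolding Ik .
  qed
  have part2: "strongly_golod n J"
    if k: "k \<ge> 2" and J: "ideal_pow n I k \<subseteq> J" "J \<subseteq> cover_symb_pow n E k" for k and J :: "'a mpoly set"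
  proof -
    have D: "deriv_ideal n J \<subseteq> mideal n (\<lambda>\<mu>. esum E (k-1) (Poly_Mapping.lookup \<mu>))"
      unfolding deriv_ideal_def
    proof (rule gi_sub_mideal[OF _ upcl_esum])
      fix a :: "'a mpoly" assume "a \<in> {pderiv_var i f |i f. i \<in> {1..n} \<and> f \<in> J}"
      then obtain i f where "a = pderiv_var i f" "f \<in> J" by blast
      then show "a \<in> mideal n (\<lambda>\<mu>. esum E (k-1) (Poly_Mapping.lookup \<mu>))"
        using J(2) Sm pderiv_mideal by blast
    qed
    have "ideal_pow n (deriv_ideal n J) 2 \<subseteq> mideal n (\<lambda>\<mu>. cov n E k (Poly_Mapping.lookup \<mu>))"
    proof (rule sq_sub[OF D upcl_esum upcl_cov])
      fix \<mu> \<nu> :: "nat \<Rightarrow>\<^sub>0 nat"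
      assume a: "Poly_Mapping.keys \<mu> \<subseteq> {1..n}" "Poly_Mapping.keys \<nu> \<subseteq> {1..n}"
        "esum E (k-1) (Poly_Mapping.lookup \<mu>)" "esum E (k-1) (Poly_Mapping.lookup \<nu>)"
      have "cov n E (Suc (k-1)) (\<lambda>i. Poly_Mapping.lookup \<mu> i + Poly_Mapping.lookup \<nu> i)"
        by (rule main_comb[OF graph Hm]) (use k a in auto)
      moreover have "Suc (k-1) = k" using k by simp
      ultimately show "cov n E k (Poly_Mapping.lookup (\<mu> + \<nu>))" unfolding lookup_plus_fun by simp
    qed
    then show ?thesis unfolding strongly_golod_def using J(1) Ik by blast
  qed
  show ?thesis using part1 part2 by blast
qed


end
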